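(* Let $d\in\mathbb N$, $\alpha>0$, $\varepsilon>0$, and let $\mathcal A=\{a_1,\dots,a_m\}\subseteq(\mathbb Z^d)^*$ be a set of primitive vectors that positively span the linear space they generate (i.e., there are $\lambda_1,\dots,\lambda_m\ge0$, not all $0$, with $\sum\lambda_ia_i=0$). Let $\mathcal N(d,\alpha,\mathcal A)$ be the set of $d$-dimensional lattice polytopes $P$ with $\alpha$-canonical normal fan and $\mathcal N_{\mathrm{core}}(P)=\mathcal A$. Then \[ \{\operatorname{qcd}(P)\mid P\in\mathcal N(d,\alpha,\mathcal A),\ \operatorname{qcd}(P)\ge\varepsilon\} \] is finite.
   Context: A $d$-dimensional lattice polytope is written $P=\{x\in\mathbb R^d\mid \langle a_i,x\rangle\le b_i,\ 1\le i\le n\}$ with an irredundant system and primitive $a_i\in(\mathbb Z^d)^*$. For rational $c>0$, $P^{(c)}=\{x\mid \langle a_i,x\rangle\le b_i-c\ \forall i\}$; $\operatorname{qcd}(P)^{-1}=\max\{c>0\mid P^{(c)}\ne\emptyset\}$; with $c_0=\operatorname{qcd}(P)^{-1}$, $\operatorname{core}P=P^{(c_0)}$, and $\mathcal N_{\mathrm{core}}(P)$ is the set of those $a_i$ with $\langle a_i,y\rangle=b_i-c_0$ for all $y\in\operatorname{core}P$. The normal fan of $P$ is the complete fan whose cones are $\operatorname{cone}(a_i\mid i\in I)$ with $I$ the set of facets containing a given face. For a rational polyhedral cone $\sigma$ with primitive ray generators $a_1,\dots,a_k$, the height of $y\in\sigma$ is $\max\{\sum\lambda_i\mid y=\sum\lambda_ia_i,\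 \lambda_i\ge0\}$; $\sigma$ is $\alpha$-canonical if every nonzero $y\in\sigma\cap(\mathbb Z^d)^*$ has height at least $\alpha$; a fan is $\alpha$-canonical if all its cones are. *)

theory Defs
  imports "HOL-Analysis.Analysis"
begin

text \<open>Vectors of the dual lattice are identified with integer vectors of real^'n
  via the standard inner product; d = CARD('n).\<close>

definition integral_vec :: "real^'n \<Rightarrow> bool" where
  "integral_vec x \<longleftrightarrow> (\<forall>i. x $ i \<in> \<int>)"

definition primitive_vec :: "real^'n \<Rightarrow> bool" where
  "primitive_vec a \<longleftrightarrow> integral_vec a \<and> a \<noteq> 0 \<and>
     (\<forall>(k::int) v. integral_vec v \<and> a = of_int k *\<^sub>R v \<longrightarrow> \<bar>k\<bar> = 1)"

definition lattice_polytope :: "(real^'n) set \<Rightarrow> bool" where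
  "lattice_polytope P \<longleftrightarrow>
     (\<exists>V. finite V \<and> (\<forall>v\<in>V. integral_vec v) \<and> P = convex hull V)
     \<and> aff_dim P = int CARD('n)"

definition supp :: "(real^'n) set \<Rightarrow> real^'n \<Rightarrow> real" where
  "supp P a = Sup ((\<lambda>x. a \<bullet> x) ` P)"

definition normal_face :: "(real^'n) set \<Rightarrow> real^'n \<Rightarrow> (real^'n) set" where
  "normal_face P a = {x\<in>P. a \<bullet> x = supp P a}"

text \<open>The primitive (outer) facet normals a_i of the irredundant description
  P = {x. a_i . x \<le> b_i}; here b_i = supp P a_i.\<close>
definition facet_normals :: "(real^'n) set \<Rightarrow> (real^'n) set" where
  "facet_normals P = {a. primitive_vec a \<and> (\<exists>F. F facet_of P \<and> F = normal_face P a)}"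

definition shrink :: "(real^'n) set \<Rightarrow> real \<Rightarrow> (real^'n) set" where
  "shrink P c = {x. \<forall>a\<in>facet_normals P. a \<bullet> x \<le> supp P a - c}"

definition qcd_inv :: "(real^'n) set \<Rightarrow> real" where
  "qcd_inv P = Sup {c. c \<in> \<rat> \<and> c > 0 \<and> shrink P c \<noteq> {}}"

definition qcd :: "(real^'n) set \<Rightarrow> real" where
  "qcd P = 1 / qcd_inv P"

definition core :: "(real^'n) set \<Rightarrow> (real^'n) set" where
  "core P = shrink P (qcd_inv P)"

definition core_normals :: "(real^'n) set \<Rightarrow> (real^'n) set" where
  "core_normals P = {a\<in>facet_normals P. \<forall>y\<in>core P. a \<bullet> y = supp P a - qcd_inv P}"

definition cone_height :: "(real^'n) set \<Rightarrow> real^'n \<Rightarrow> real" where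
  "cone_height gens y = Sup {(\<Sum>a\<in>gens. l a) | l.
      (\<forall>a\<in>gens. l a \<ge> 0) \<and> y = (\<Sum>a\<in>gens. l a *\<^sub>R a)}"

definition alpha_canonical_cone :: "real \<Rightarrow> (real^'n) set \<Rightarrow> bool" where
  "alpha_canonical_cone \<alpha> gens \<longleftrightarrow>
     (\<forall>y. integral_vec y \<and> y \<noteq> 0 \<and>
        (\<exists>l. (\<forall>a\<in>gens. l a \<ge> 0) \<and> y = (\<Sum>a\<in>gens. l a *\<^sub>R a))
        \<longrightarrow> cone_height gens y \<ge> \<alpha>)"

definition normal_fan_cone_gens :: "(real^'n) set \<Rightarrow> (real^'n) set \<Rightarrow> (real^'n) set" where
  "normal_fan_cone_gens P G = {a\<in>facet_normals P. G \<subseteq> normal_face P a}"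

definition alpha_canonical_normal_fan :: "real \<Rightarrow> (real^'n) set \<Rightarrow> bool" where
  "alpha_canonical_normal_fan \<alpha> P \<longleftrightarrow>
     (\<forall>G. G face_of P \<and> G \<noteq> {} \<longrightarrow> alpha_canonical_cone \<alpha> (normal_fan_cone_gens P G))"

definition NN :: "real \<Rightarrow> (real^'n) set \<Rightarrow> (real^'n) set set" where
  "NN \<alpha> A = {P. lattice_polytope P \<and> alpha_canonical_normal_fan \<alpha> P \<and> core_normals P = A}"

end

theory Submission
  imports Defs
begin



lemma rat_approx_relation:
  fixes v :: "'i \<Rightarrow> real^'n"
  assumes "finite I" "\<forall>i\<in>I. \<forall>j. v i $ j \<in> \<rat>" "(\<Sum>i\<in>I. l i *\<^sub>R v i) = 0" "\<delta> > 0"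
  shows "\<exists>l'. (\<forall>i\<in>I. l' i \<in> \<rat> \<and> \<bar>l' i - l i\<bar> < \<delta>) \<and> (\<Sum>i\<in>I. l' i *\<^sub>R v i) = 0"
  using assms
proof (induction "card I" arbitrary: I v l \<delta> rule: less_induct)
  case less
  show ?case
  proof (cases "\<forall>i\<in>I. v i = 0")
    case True
    have "\<forall>i. \<exists>r. r \<in> \<rat> \<and> l i - \<delta> < r \<and> r < l i"
    proof
      fix i show "\<exists>r. r \<in> \<rat> \<and> l i - \<delta> < r \<and> r < l i"
        using Rats_dense_in_real[of "l i - \<delta>" "l i"] less.prems(4) by auto
    qed
    then obtain l' where l': "\<And>i. l' i \<in> \<rat> \<and> l i - \<delta> < l' i \<and> l' i < l i" by metis
    have "\<forall>i\<in>I. l' i \<in> \<rat> \<and> \<bar>l' i - l i\<bar> < \<delta>"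
    proof
      fix i assume "i \<in> I" from l'[of i] show "l' i \<in> \<rat> \<and> \<bar>l' i - l i\<bar> < \<delta>" by auto
    qed
    then show ?thesis using True by auto
  next
    case False
    then obtain i where iI: "i \<in> I" and "v i \<noteq> 0" by auto
    then obtain j where vij: "v i $ j \<noteq> 0" by (metis vec_eq_iff zero_index)
    define I' where "I' = I - {i}"
    define r where "r k = v k $ j / v i $ j" for k
    define w where "w k = v k - r k *\<^sub>R v i" for k
    have fin': "finite I'" using less.prems(1) by (simp add: I'_def)
    have card': "card I' < card I" unfolding I'_def by (rule card_Diff1_less[OF less.prems(1) iI])
    have rQ: "r k \<in> \<rat>" if "k \<in> I" for k
      using less.prems(2) that iI by (simp add: r_def)
    have wQ: "\<forall>k\<in>I'. \<forall>j. w k $ j \<in> \<rat>"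
      using less.prems(2) rQ iI by (auto simp: w_def I'_def)
    have split: "(\<Sum>k\<in>I. f k) = f i + (\<Sum>k\<in>I'. f k)" for f :: "'i \<Rightarrow> 'b::comm_monoid_add"
      using sum.remove[OF less.prems(1) iI] by (simp add: I'_def)
    have e1: "l i *\<^sub>R v i + (\<Sum>k\<in>I'. l k *\<^sub>R v k) = 0" using less.prems(3) split by metis
    hence "(l i *\<^sub>R v i + (\<Sum>k\<in>I'. l k *\<^sub>R v k)) $ j = 0" by simp
    hence "l i * v i $ j + (\<Sum>k\<in>I'. l k * v k $ j) = 0" by simp
    hence "(\<Sum>k\<in>I'. l k * r k) = - l i"
      using vij by (simp add: r_def sum_divide_distrib[symmetric] field_simps)
    have sw: "(\<Sum>k\<in>I'. l k *\<^sub>R w k) = 0"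
    proof -
      have "(\<Sum>k\<in>I'. l k *\<^sub>R w k) = (\<Sum>k\<in>I'. l k *\<^sub>R v k) - (\<Sum>k\<in>I'. l k * r k) *\<^sub>R v i"
        by (simp add: w_def scaleR_diff_right sum_subtractf scaleR_sum_left)
      also have "\<dots> = 0" using e1 \<open>(\<Sum>k\<in>I'. l k * r k) = - l i\<close>
        by (metis (no_types) add.commute diff_minus_eq_add scaleR_minus_left)
      finally show ?thesis .
    qed
    define R where "R = (\<Sum>k\<in>I'. \<bar>r k\<bar>)"
    have R0: "R \<ge> 0" unfolding R_def by (simp add: sum_nonneg)
    define \<delta>' where "\<delta>' = \<delta> / (1 + R)"
    have d': "\<delta>' > 0" using R0 less.prems(4) by (simp add: \<delta>'_def)
    obtain l' where l'Q: "\<forall>k\<in>I'. l' k \<in> \<rat> \<and> \<bar>l' k - l k\<bar> < \<delta>'"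
      and l'0: "(\<Sum>k\<in>I'. l' k *\<^sub>R w k) = 0"
      using less.hyps[OF card' fin' wQ sw d'] by blast
    define l'' where "l'' = l'(i := - (\<Sum>k\<in>I'. l' k * r k))"
    have l''I': "l'' k = l' k" if "k \<in> I'" for k using that by (simp add: l''_def I'_def)
    have "\<bar>l'' i - l i\<bar> = \<bar>(\<Sum>k\<in>I'. (l k - l' k) * r k)\<bar>"
      using \<open>(\<Sum>k\<in>I'. l k * r k) = - l i\<close>
      by (simp add: l''_def left_diff_distrib sum_subtractf)
    also have "\<dots> \<le> (\<Sum>k\<in>I'. \<bar>(l k - l' k) * r k\<bar>)" by (rule sum_abs)
    also have "\<dots> \<le> (\<Sum>k\<in>I'. \<delta>' * \<bar>r k\<bar>)"
      by (rule sum_mono) (use l'Q in \<open>auto simp: abs_mult intro!: mult_right_mono\<close>)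
    also have "\<dots> = \<delta>' * R" by (simp add: R_def sum_distrib_left)
    also have "\<dots> < \<delta>" using R0 less.prems(4) by (simp add: \<delta>'_def field_simps)
    finally have ci: "\<bar>l'' i - l i\<bar> < \<delta>" .
    have "(\<Sum>k\<in>I'. l' k *\<^sub>R v k) = (\<Sum>k\<in>I'. l' k *\<^sub>R w k) + (\<Sum>k\<in>I'. l' k * r k) *\<^sub>R v i"
      by (simp add: w_def scaleR_diff_right sum_subtractf scaleR_sum_left)
    hence "(\<Sum>k\<in>I'. l' k *\<^sub>R v k) = (\<Sum>k\<in>I'. l' k * r k) *\<^sub>R v i" using l'0 by simp
    hence "(\<Sum>k\<in>I. l'' k *\<^sub>R v k) = 0"
      using split[of "\<lambda>k. l'' k *\<^sub>R v k"] l''I' by (simp add: l''_def)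
    moreover have "\<forall>k\<in>I. l'' k \<in> \<rat> \<and> \<bar>l'' k - l k\<bar> < \<delta>"
    proof
      fix k assume "k \<in> I"
      show "l'' k \<in> \<rat> \<and> \<bar>l'' k - l k\<bar> < \<delta>"
      proof (cases "k = i")
        case True
        have "(\<Sum>k\<in>I'. l' k * r k) \<in> \<rat>"
          using l'Q rQ by (intro Rats_sum Rats_mult) (auto simp: I'_def)
        then show ?thesis using True ci by (simp add: l''_def)
      next
        case False
        hence "k \<in> I'" using \<open>k \<in> I\<close> by (simp add: I'_def)
        have dle: "\<delta>' \<le> \<delta>" unfolding \<delta>'_def
          using R0 less.prems(4) mult_nonneg_nonneg[of \<delta> R] by (simp add: field_simps)
        then show ?thesis using l'Q l''I' \<open>k \<in> I'\<close> by fastforce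
      qed
    qed
    ultimately show ?thesis by blast
  qed
qed



lemma integral_vec_Rats: "integral_vec a \<Longrightarrow> a $ j \<in> \<rat>"
  unfolding integral_vec_def using Ints_subset_Rats by blast

lemma rat_pos_relation:
  fixes A :: "(real^'n) set"
  assumes "finite A" "\<forall>a\<in>A. integral_vec a" "\<forall>a\<in>A. l a \<ge> 0" "\<exists>a\<in>A. l a \<noteq> 0"
    "(\<Sum>a\<in>A. l a *\<^sub>R a) = 0"
    and approx: "\<And>(I::(real^'n) set) (v::real^'n \<Rightarrow> real^'n) l \<delta>. finite I \<Longrightarrow> \<forall>i\<in>I. \<forall>j. v i $ j \<in> \<rat>
       \<Longrightarrow> (\<Sum>i\<in>I. l i *\<^sub>R v i) = 0 \<Longrightarrow> \<delta> > 0 \<Longrightarrow>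
       \<exists>l'. (\<forall>i\<in>I. l' i \<in> \<rat> \<and> \<bar>l' i - l i\<bar> < \<delta>) \<and> (\<Sum>i\<in>I. l' i *\<^sub>R v i) = 0"
  shows "\<exists>\<mu>. (\<forall>a\<in>A. \<mu> a \<in> \<rat> \<and> \<mu> a \<ge> 0) \<and> (\<exists>a\<in>A. \<mu> a > 0) \<and> (\<Sum>a\<in>A. \<mu> a *\<^sub>R a) = 0"
proof -
  define I where "I = {a\<in>A. l a > 0}"
  have finI: "finite I" using assms(1) by (simp add: I_def)
  have Ine: "I \<noteq> {}" using assms(3,4) by (force simp: I_def)
  have sI: "(\<Sum>a\<in>I. l a *\<^sub>R a) = 0"
  proof -
    have "(\<Sum>a\<in>I. l a *\<^sub>R a) = (\<Sum>a\<in>A. l a *\<^sub>R a)"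
      by (rule sum.mono_neutral_left) (use assms(1,3) in \<open>auto simp: I_def\<close>)
    then show ?thesis using assms(5) by simp
  qed
  define \<delta> where "\<delta> = Min (l ` I)"
  have d0: "\<delta> > 0" using finI Ine by (auto simp: \<delta>_def I_def)
  have dle: "\<delta> \<le> l a" if "a \<in> I" for a using finI that by (simp add: \<delta>_def)
  have vQ: "\<forall>i\<in>I. \<forall>j. id i $ j \<in> \<rat>" using assms(2) integral_vec_Rats by (auto simp: I_def)
  obtain l' where l': "\<forall>i\<in>I. l' i \<in> \<rat> \<and> \<bar>l' i - l i\<bar> < \<delta>" and s': "(\<Sum>i\<in>I. l' i *\<^sub>R id i) = 0"
    using approx[OF finI vQ _ d0, of l] sI by auto
  have pos: "l' a > 0" if "a \<in> I" for a using l' dle[OF that] that by fastforce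
  define \<mu> where "\<mu> a = (if a \<in> I then l' a else 0)" for a
  have "(\<Sum>a\<in>A. \<mu> a *\<^sub>R a) = (\<Sum>a\<in>I. \<mu> a *\<^sub>R a)"
    by (rule sum.mono_neutral_right) (use assms(1) in \<open>auto simp: I_def \<mu>_def\<close>)
  also have "\<dots> = 0" using s' by (simp add: \<mu>_def)
  finally have "(\<Sum>a\<in>A. \<mu> a *\<^sub>R a) = 0" .
  moreover have "\<forall>a\<in>A. \<mu> a \<in> \<rat> \<and> \<mu> a \<ge> 0" using l' pos by (auto simp: \<mu>_def less_imp_le)
  moreover have "\<exists>a\<in>A. \<mu> a > 0" using Ine pos by (auto simp: \<mu>_def I_def)
  ultimately show ?thesis by blast
qed

lemma denom_bound:
  fixes A :: "(real^'n) set"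
  assumes "finite A" "\<forall>a\<in>A. \<mu> a \<in> \<rat> \<and> \<mu> a \<ge> 0" "\<exists>a\<in>A. \<mu> a > 0" "(\<Sum>a\<in>A. \<mu> a *\<^sub>R a) = 0"
  shows "\<exists>N>0. \<forall>(c::real) y b. (\<forall>a\<in>A. b a \<in> \<int> \<and> a \<bullet> y = b a - c) \<longrightarrow> N * c \<in> \<int>"
proof -
  have "\<forall>a\<in>A. \<exists>q::int. q > 0 \<and> of_int q * \<mu> a \<in> \<int>"
  proof
    fix a assume "a \<in> A"
    then have "\<mu> a \<in> \<rat>" using assms(2) by auto
    then obtain p q where "q > 0" "\<mu> a = of_int p / of_int q" by (rule Rats_cases')
    then show "\<exists>q::int. q > 0 \<and> of_int q * \<mu> a \<in> \<int>" by (intro exI[of _ q]) auto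
  qed
  then obtain Q where Q: "\<forall>a\<in>A. Q a > (0::int) \<and> of_int (Q a) * \<mu> a \<in> \<int>" by metis
  define D where "D = (\<Prod>a\<in>A. real_of_int (Q a))"
  have D0: "D > 0" unfolding D_def using Q by (intro prod_pos) auto
  have DI: "D * \<mu> a \<in> \<int>" if "a \<in> A" for a
  proof -
    have "D = of_int (Q a) * (\<Prod>a\<in>A-{a}. real_of_int (Q a))"
      unfolding D_def using prod.remove[OF assms(1) that] by simp
    hence "D * \<mu> a = (of_int (Q a) * \<mu> a) * (\<Prod>a\<in>A-{a}. real_of_int (Q a))" by simp
    then show ?thesis using Q that by (metis Ints_mult Ints_of_int Ints_prod)
  qed
  define S where "S = (\<Sum>a\<in>A. \<mu> a)"
  have S0: "S > 0" unfolding S_def using assms(1,2,3)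
    by (metis sum_pos2)
  show ?thesis
  proof (intro exI[of _ "D * S"] conjI allI impI)
    show "D * S > 0" using D0 S0 by simp
    fix c :: real and y and b :: "real^'n \<Rightarrow> real"
    assume h: "\<forall>a\<in>A. b a \<in> \<int> \<and> a \<bullet> y = b a - c"
    have "0 = (\<Sum>a\<in>A. \<mu> a *\<^sub>R a) \<bullet> y" using assms(4) by simp
    also have "\<dots> = (\<Sum>a\<in>A. \<mu> a * (a \<bullet> y))" by (simp add: inner_sum_left)
    also have "\<dots> = (\<Sum>a\<in>A. \<mu> a * b a) - c * S"
      using h by (simp add: S_def right_diff_distrib sum_subtractf sum_distrib_left mult.commute)
    finally have "c * S = (\<Sum>a\<in>A. \<mu> a * b a)" by simp
    hence "D * S * c = (\<Sum>a\<in>A. (D * \<mu> a) * b a)"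
      by (simp add: sum_distrib_left mult.assoc mult.left_commute mult.commute)
    also have "\<dots> \<in> \<int>" proof (rule Ints_sum)
      fix a assume "a \<in> A"
      then show "(D * \<mu> a) * b a \<in> \<int>" by (rule Ints_mult[OF DI]) (use h \<open>a \<in> A\<close> in auto)
    qed
    finally show "D * S * c \<in> \<int>" .
  qed
qed



lemma integral_inner_Ints:
  assumes "integral_vec a" "integral_vec v" shows "a \<bullet> v \<in> \<int>"
  using assms unfolding integral_vec_def inner_vec_def by (auto intro!: Ints_sum Ints_mult)

lemma lattice_polytope_supp:
  fixes P :: "(real^'n) set"
  assumes "lattice_polytope P" "integral_vec a"
  shows "P \<noteq> {}" "supp P a \<in> \<int>" "\<And>x. x \<in> P \<Longrightarrow> a \<bullet> x \<le> supp P a"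
proof -
  obtain V where V: "finite V" "\<forall>v\<in>V. integral_vec v" "P = convex hull V"
    and ad: "aff_dim P = int CARD('n)"
    using assms(1) unfolding lattice_polytope_def by blast
  show Pne: "P \<noteq> {}" using ad aff_dim_empty[of P] by auto
  hence Vne: "V \<noteq> {}" using V(3) by auto
  define M where "M = Max ((\<lambda>v. a \<bullet> v) ` V)"
  have MV: "M \<in> (\<lambda>v. a \<bullet> v) ` V" unfolding M_def using V(1) Vne by (intro Max_in) auto
  have sub: "P \<subseteq> {x. a \<bullet> x \<le> M}"
    unfolding V(3) by (rule hull_minimal) (use V(1) in \<open>auto simp: M_def convex_halfspace_le\<close>)
  have "supp P a = M"
    unfolding supp_def
  proof (rule cSup_eq_maximum)
    show "M \<in> (\<lambda>x. a \<bullet> x) ` P" using MV V(3) hull_subset[of V convex] by blast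
    show "\<And>x. x \<in> (\<lambda>x. a \<bullet> x) ` P \<Longrightarrow> x \<le> M" using sub by auto
  qed
  then show "supp P a \<in> \<int>"
  proof -
    obtain v where "v \<in> V" "M = a \<bullet> v" using MV by auto
    then show ?thesis using V(2) assms(2) \<open>supp P a = M\<close> by (simp add: integral_inner_Ints)
  qed
  show "\<And>x. x \<in> P \<Longrightarrow> a \<bullet> x \<le> supp P a" using sub \<open>supp P a = M\<close> by auto
qed

lemma hyperplane_parallel:
  fixes a a' :: "'a::euclidean_space"
  assumes "a \<noteq> 0" "{x. a \<bullet> x = s} = {x. a' \<bullet> x = s'}"
  shows "a' = ((a' \<bullet> a) / (a \<bullet> a)) *\<^sub>R a"
proof -
  obtain x0 where x0: "a \<bullet> x0 = s" using hyperplane_eq_Ex[OF assms(1)] by blast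
  define t where "t = (a' \<bullet> a) / (a \<bullet> a)"
  define w where "w = a' - t *\<^sub>R a"
  have wa: "w \<bullet> a = 0" using assms(1) by (simp add: w_def t_def inner_diff_left)
  have "a \<bullet> (x0 + w) = s" using x0 wa by (simp add: inner_add_right inner_commute)
  hence "a' \<bullet> (x0 + w) = s'" using assms(2) by blast
  moreover have "a' \<bullet> x0 = s'" using x0 assms(2) by blast
  ultimately have "a' \<bullet> w = 0" by (simp add: inner_add_right)
  hence "w \<bullet> w = 0" using wa by (simp add: w_def inner_diff_left inner_commute)
  hence "w = 0" by simp
  then show ?thesis by (simp add: w_def t_def)
qed

lemma int_floor_eq: "x \<in> \<int> \<Longrightarrow> of_int \<lfloor>x\<rfloor> = (x::real)"
  by (metis Ints_cases floor_of_int)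

lemma primitive_scale_eq:
  fixes a b :: "real^'n"
  assumes "primitive_vec a" "primitive_vec b" "b = t *\<^sub>R a" "t > 0"
  shows "b = a"
proof -
  have ia: "integral_vec a" and ib: "integral_vec b" and a0: "a \<noteq> 0"
    using assms unfolding primitive_vec_def by auto
  obtain i where ai: "a $ i \<noteq> 0" using a0 by (metis vec_eq_iff zero_index)
  have "t = b $ i / a $ i" using assms(3) ai by simp
  hence "t \<in> \<rat>" using ia ib unfolding integral_vec_def
    by (metis Ints_subset_Rats Rats_divide subsetD)
  then obtain p q :: int where q0: "q > 0" and cop: "coprime p q" and tpq: "t = of_int p / of_int q"
    by (rule Rats_cases')
  have "real_of_int p = t * of_int q" using q0 tpq by simp
  hence "real_of_int p > 0" using assms(4) q0 by simp
  hence p0: "p > 0" by simp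
  define A where "A j = \<lfloor>a $ j\<rfloor>" for j
  define B where "B j = \<lfloor>b $ j\<rfloor>" for j
  have aA: "a $ j = of_int (A j)" for j using ia int_floor_eq unfolding integral_vec_def A_def by metis
  have bB: "b $ j = of_int (B j)" for j using ib int_floor_eq unfolding integral_vec_def B_def by metis
  have eq: "q * B j = p * A j" for j
  proof -
    have "b $ j = (of_int p / of_int q) * a $ j" using assms(3) tpq by simp
    hence "of_int q * b $ j = of_int p * a $ j" using q0 by (simp add: field_simps)
    then show ?thesis using aA bB by (metis of_int_eq_iff of_int_mult)
  qed
  have qdvd: "q dvd A j" for j
  proof -
    have "q dvd p * A j" using eq[of j] by (metis dvd_triv_left)
    then show ?thesis using cop by (simp add: coprime_dvd_mult_right_iff coprime_commute)
  qed
  define v where "v = (\<chi> j. real_of_int (A j div q))"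
  have iv: "integral_vec v" unfolding integral_vec_def v_def by simp
  have "a = of_int q *\<^sub>R v"
    unfolding vec_eq_iff v_def using qdvd aA by (auto simp: dvd_div_mult_self)
      (metis dvd_mult_div_cancel of_int_mult)
  hence "\<bar>q\<bar> = 1" using assms(1) iv unfolding primitive_vec_def by blast
  hence q1: "q = 1" using q0 by simp
  hence "b = of_int p *\<^sub>R a" using assms(3) tpq by simp
  hence "\<bar>p\<bar> = 1" using assms(2) ia unfolding primitive_vec_def by blast
  hence "t = 1" using tpq q1 p0 by simp
  then show ?thesis using assms(3) by simp
qed



lemma facet_normals_inj:
  fixes P :: "(real^'n) set"
  assumes lp: "lattice_polytope P" and ha: "a \<in> facet_normals P" and ha': "a' \<in> facet_normals P"
    and eq: "normal_face P a = normal_face P a'"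
  shows "a = a'"
proof -
  define G where "G = normal_face P a"
  have pa: "primitive_vec a" and pa': "primitive_vec a'" and fG: "G facet_of P"
    using ha ha' unfolding facet_normals_def G_def by auto
  have ia: "integral_vec a" "a \<noteq> 0" and ia': "integral_vec a'" "a' \<noteq> 0"
    using pa pa' unfolding primitive_vec_def by auto
  have ad: "aff_dim P = int CARD('n)" using lp unfolding lattice_polytope_def by auto
  have Gne: "G \<noteq> {}" and adG: "aff_dim G = int CARD('n) - 1" using fG ad unfolding facet_of_def by auto
  have hull_eq: "affine hull G = {x. b \<bullet> x = supp P b}"
    if "b \<noteq> 0" "G = normal_face P b" for b :: "real^'n"
  proof (rule affine_dim_equal)
    show "affine (affine hull G)" by simp
    show "affine {x. b \<bullet> x = supp P b}" by (rule affine_hyperplane)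
    show "affine hull G \<noteq> {}" using Gne by simp
    show "affine hull G \<subseteq> {x. b \<bullet> x = supp P b}"
      by (rule hull_minimal) (use that in \<open>auto simp: normal_face_def affine_hyperplane\<close>)
    show "aff_dim (affine hull G) = aff_dim {x. b \<bullet> x = supp P b}"
      using that adG by simp
  qed
  have Heq: "{x. a \<bullet> x = supp P a} = {x. a' \<bullet> x = supp P a'}"
    using hull_eq[OF ia(2)] hull_eq[OF ia'(2)] eq by (simp add: G_def)
  define t where "t = (a' \<bullet> a) / (a \<bullet> a)"
  have a't: "a' = t *\<^sub>R a" using hyperplane_parallel[OF ia(2) Heq] by (simp add: t_def)
  obtain g where gG: "g \<in> G" using Gne by auto
  have ga: "a \<bullet> g = supp P a" and ga': "a' \<bullet> g = supp P a'"
    using gG eq unfolding G_def normal_face_def by auto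
  have ss: "supp P a' = t * supp P a" using ga ga' a't by simp
  have "\<exists>x\<in>P. a \<bullet> x \<noteq> supp P a"
  proof (rule ccontr)
    assume "\<not> ?thesis"
    hence "P \<subseteq> {x. a \<bullet> x = supp P a}" by auto
    hence "aff_dim P \<le> aff_dim {x. a \<bullet> x = supp P a}" by (rule aff_dim_subset)
    then show False using ad ia(2) by simp
  qed
  then obtain x where xP: "x \<in> P" and "a \<bullet> x \<noteq> supp P a" by blast
  hence lt: "a \<bullet> x < supp P a" using lattice_polytope_supp(3)[OF lp ia(1) xP] by simp
  have le': "a' \<bullet> x \<le> supp P a'" using lattice_polytope_supp(3)[OF lp ia'(1) xP] .
  have "t > 0"
  proof (rule ccontr)
    assume "\<not> t > 0"
    moreover have "t \<noteq> 0" using a't ia'(2) by auto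
    ultimately have "t < 0" by simp
    hence "t * supp P a < t * (a \<bullet> x)" using lt by (simp add: mult_less_cancel_left_neg)
    then show False using le' ss a't by simp
  qed
  then show ?thesis using primitive_scale_eq[OF pa pa' a't] by simp
qed

lemma facet_normals_finite:
  fixes P :: "(real^'n) set"
  assumes lp: "lattice_polytope P"
  shows "finite (facet_normals P)"
proof -
  have "polytope P" using lp unfolding lattice_polytope_def polytope_def by blast
  hence fin: "finite {T. T facet_of P}" by (rule finite_polytope_facets)
  have "normal_face P ` facet_normals P \<subseteq> {T. T facet_of P}"
    unfolding facet_normals_def by auto
  hence "finite (normal_face P ` facet_normals P)" using fin finite_subset by blast
  moreover have "inj_on (normal_face P) (facet_normals P)"
    using facet_normals_inj[OF lp] by (auto simp: inj_on_def)
  ultimately show ?thesis using finite_imageD by blast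
qed



lemma farkas_finite:
  fixes F :: "(real^'n) set" and \<beta> :: "real^'n \<Rightarrow> real"
  assumes finF: "finite F" and empty: "{y. \<forall>a\<in>F. a \<bullet> y \<le> \<beta> a} = {}"
  shows "\<exists>\<nu>. (\<forall>a\<in>F. \<nu> a \<ge> 0) \<and> (\<Sum>a\<in>F. \<nu> a *\<^sub>R a) = 0 \<and> (\<Sum>a\<in>F. \<nu> a * \<beta> a) = -1"
proof -
  define G where "G = (\<lambda>a. (a, \<beta> a)) ` F"
  define K where "K = {(\<Sum>a\<in>F. \<nu> a *\<^sub>R (a, \<beta> a)) | \<nu>. \<forall>a\<in>F. \<nu> a \<ge> 0}"
  define z :: "(real^'n) \<times> real" where "z = (0, -1)"
  show ?thesis
  proof (cases "z \<in> K")
    case True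
    then obtain \<nu> where nu: "\<forall>a\<in>F. \<nu> a \<ge> 0" and zs: "z = (\<Sum>a\<in>F. \<nu> a *\<^sub>R (a, \<beta> a))"
      unfolding K_def by blast
    have "fst z = (\<Sum>a\<in>F. \<nu> a *\<^sub>R a)" "snd z = (\<Sum>a\<in>F. \<nu> a * \<beta> a)"
      unfolding zs by (simp_all add: fst_sum snd_sum)
    then show ?thesis using nu by (auto simp: z_def)
  next
    case False
    have GK: "G \<subseteq> K"
    proof
      fix g assume "g \<in> G"
      then obtain a0 where a0: "a0 \<in> F" "g = (a0, \<beta> a0)" by (auto simp: G_def)
      define \<nu> where "\<nu> a = (if a = a0 then 1 else (0::real))" for a
      have "(\<Sum>a\<in>F. \<nu> a *\<^sub>R (a, \<beta> a)) = (a0, \<beta> a0)"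
        using a0(1) finF proof -
        have "(\<Sum>a\<in>F. \<nu> a *\<^sub>R (a, \<beta> a)) = (\<Sum>a\<in>F. if a = a0 then (a, \<beta> a) else 0)"
          by (rule sum.cong) (auto simp: \<nu>_def zero_prod_def)
        also have "\<dots> = (a0, \<beta> a0)" using a0(1) finF by (simp add: sum.delta)
        finally show ?thesis .
      qed
      then show "g \<in> K" unfolding K_def using a0 by (auto simp: \<nu>_def intro!: exI[of _ \<nu>])
    qed
    have cK: "convex_cone K"
      unfolding convex_cone_iff
    proof (intro conjI ballI allI impI)
      show "0 \<in> K" unfolding K_def by (auto simp: zero_prod_def[symmetric] intro!: exI[of _ "\<lambda>_. 0"])
      fix x y assume "x \<in> K" "y \<in> K"
      then obtain \<nu> \<nu>' where "\<forall>a\<in>F. \<nu> a \<ge> 0" "x = (\<Sum>a\<in>F. \<nu> a *\<^sub>R (a, \<beta> a))"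
        "\<forall>a\<in>F. \<nu>' a \<ge> 0" "y = (\<Sum>a\<in>F. \<nu>' a *\<^sub>R (a, \<beta> a))" unfolding K_def by blast
      then show "x + y \<in> K" unfolding K_def
        apply (intro CollectI exI[of _ "\<lambda>a. \<nu> a + \<nu>' a"] conjI)
         apply (simp only: scaleR_add_left sum.distrib)
        by auto
    next
      fix x and c :: real assume "x \<in> K" "0 \<le> c"
      then obtain \<nu> where "\<forall>a\<in>F. \<nu> a \<ge> 0" "x = (\<Sum>a\<in>F. \<nu> a *\<^sub>R (a, \<beta> a))" unfolding K_def by blast
      then show "c *\<^sub>R x \<in> K" unfolding K_def using \<open>0 \<le> c\<close>
        apply (intro CollectI exI[of _ "\<lambda>a. c * \<nu> a"] conjI)
         apply (simp only: scaleR_sum_right scaleR_scaleR)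
        by auto
    qed
    define C where "C = convex_cone hull G"
    have CK: "C \<subseteq> K" unfolding C_def using GK cK by (rule hull_minimal)
    have zC: "z \<notin> C" using False CK by blast
    have "closed C" unfolding C_def using finF by (simp add: G_def closed_convex_cone_hull)
    moreover have "convex C" unfolding C_def by (rule convex_convex_cone_hull)
    ultimately obtain w b where wz: "inner w z < b" and wC: "\<forall>x\<in>C. inner w x > b"
      using separating_hyperplane_closed_point zC by blast
    have "0 \<in> C" unfolding C_def by (rule convex_cone_hull_contains_0)
    hence b0: "b < 0" using wC by fastforce
    have nn: "inner w x \<ge> 0" if "x \<in> C" for x
    proof (rule ccontr)
      assume "\<not> inner w x \<ge> 0"
      hence neg: "inner w x < 0" by simp
      define c where "c = b / inner w x"
      have "c \<ge> 0" using b0 neg by (simp add: c_def divide_nonpos_neg)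
      hence "c *\<^sub>R x \<in> C" unfolding C_def using that convex_cone_hull_mul C_def by blast
      hence "inner w (c *\<^sub>R x) > b" using wC by blast
      moreover have "inner w (c *\<^sub>R x) = b" using neg by (simp add: c_def)
      ultimately show False by simp
    qed
    obtain u s where w: "w = (u, s)" by (cases w)
    have "inner w z = - s" unfolding w z_def by (simp only: inner_Pair inner_zero_right) simp
    hence s0: "s > 0" using wz b0 by linarith
    define y where "y = - (1 / s) *\<^sub>R u"
    have "\<forall>a\<in>F. a \<bullet> y \<le> \<beta> a"
    proof
      fix a assume "a \<in> F"
      hence "(a, \<beta> a) \<in> G" by (simp add: G_def)
      hence "(a, \<beta> a) \<in> C" unfolding C_def by (rule hull_inc)
      hence "inner w (a, \<beta> a) \<ge> 0" using nn by blast
      hence "u \<bullet> a + s * \<beta> a \<ge> 0" unfolding w by (simp only: inner_Pair inner_real_def)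
      hence h': "- (u \<bullet> a) \<le> \<beta> a * s" by (simp add: mult.commute)
      have "- (u \<bullet> a) / s \<le> \<beta> a" using pos_divide_le_eq[OF s0] h' by metis
      moreover have "a \<bullet> y = - (u \<bullet> a) / s" unfolding y_def
        by (simp only: inner_scaleR_right inner_commute) simp
      ultimately show "a \<bullet> y \<le> \<beta> a" by simp
    qed
    then have "y \<in> {y. \<forall>a\<in>F. a \<bullet> y \<le> \<beta> a}" by simp
    then show ?thesis using empty by simp
  qed
qed




lemma core_nonempty:
  fixes P :: "(real^'n) set"
  assumes lp: "lattice_polytope P"
    and Sne: "{c. c \<in> \<rat> \<and> c > 0 \<and> shrink P c \<noteq> {}} \<noteq> {}"
    and Sbdd: "bdd_above {c. c \<in> \<rat> \<and> c > 0 \<and> shrink P c \<noteq> {}}"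
  shows "core P \<noteq> {}"
proof
  assume ce: "core P = {}"
  define S where "S = {c. c \<in> \<rat> \<and> c > 0 \<and> shrink P c \<noteq> {}}"
  define c0 where "c0 = Sup S"
  define F where "F = facet_normals P"
  have finF: "finite F" unfolding F_def by (rule facet_normals_finite[OF lp])
  have "core P = {y. \<forall>a\<in>F. a \<bullet> y \<le> supp P a - c0}"
    unfolding core_def shrink_def qcd_inv_def c0_def S_def F_def by (rule refl)
  hence "{y. \<forall>a\<in>F. a \<bullet> y \<le> supp P a - c0} = {}" using ce by simp
  from farkas_finite[OF finF this] obtain \<nu> where nu0: "\<forall>a\<in>F. \<nu> a \<ge> 0" and nu1: "(\<Sum>a\<in>F. \<nu> a *\<^sub>R a) = 0"
    and nu2: "(\<Sum>a\<in>F. \<nu> a * (supp P a - c0)) = -1"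
    by blast
  define T where "T = (\<Sum>a\<in>F. \<nu> a)"
  have T0: "T \<ge> 0" unfolding T_def using nu0 by (simp add: sum_nonneg)
  have "c0 \<in> closure S" unfolding c0_def S_def using Sne Sbdd by (rule closure_contains_Sup)
  have e0: "1 / (1 + T) > 0" using T0 by simp
  obtain c where cS: "c \<in> S" and dc: "dist c c0 < 1 / (1 + T)"
    using \<open>c0 \<in> closure S\<close> e0 unfolding closure_approachable by blast
  have "shrink P c \<noteq> {}" using cS by (simp add: S_def)
  then obtain y where y: "y \<in> shrink P c" by blast
  have ay: "\<forall>a\<in>F. a \<bullet> y \<le> supp P a - c" using y unfolding shrink_def F_def by auto
  have "0 = (\<Sum>a\<in>F. \<nu> a *\<^sub>R a) \<bullet> y" using nu1 by simp
  also have "\<dots> = (\<Sum>a\<in>F. \<nu> a * (a \<bullet> y))" by (simp add: inner_sum_left)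
  also have "\<dots> \<le> (\<Sum>a\<in>F. \<nu> a * (supp P a - c))"
    by (rule sum_mono) (use nu0 ay in \<open>auto intro: mult_left_mono\<close>)
  also have "\<dots> = (\<Sum>a\<in>F. \<nu> a * (supp P a - c0) + \<nu> a * (c0 - c))"
    by (rule sum.cong) (simp_all add: right_diff_distrib)
  also have "\<dots> = (\<Sum>a\<in>F. \<nu> a * (supp P a - c0)) + (c0 - c) * T"
    by (simp add: T_def sum.distrib sum_distrib_left mult.commute)
  also have "\<dots> = -1 + (c0 - c) * T" using nu2 by simp
  finally have h: "1 \<le> (c0 - c) * T" by simp
  have "\<bar>c0 - c\<bar> < 1 / (1 + T)" using dc by (simp add: dist_real_def abs_minus_commute)
  hence "\<bar>c0 - c\<bar> * (1 + T) < 1" using T0 by (simp add: field_simps)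
  moreover have "(c0 - c) * T \<le> \<bar>c0 - c\<bar> * T" using T0 by (simp add: mult_right_mono)
  moreover have "\<bar>c0 - c\<bar> * T \<le> \<bar>c0 - c\<bar> * (1 + T)" by (simp add: mult_left_mono)
  ultimately show False using h by linarith
qed

theorem lemma3p9:
  fixes A :: "(real^'n) set" and \<alpha> \<epsilon> :: real
  assumes "\<alpha> > 0" and "\<epsilon> > 0"
    and "finite A" and "\<forall>a\<in>A. primitive_vec a"
    and "\<exists>l. (\<forall>a\<in>A. l a \<ge> 0) \<and> (\<exists>a\<in>A. l a \<noteq> 0) \<and> (\<Sum>a\<in>A. l a *\<^sub>R a) = 0"
  shows "finite {qcd P | P. P \<in> NN \<alpha> A \<and> qcd P \<ge> \<epsilon>}"
proof -
  have intA: "\<forall>a\<in>A. integral_vec a" using assms(4) unfolding primitive_vec_def by auto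
  obtain l where l: "\<forall>a\<in>A. l a \<ge> 0" "\<exists>a\<in>A. l a \<noteq> 0" "(\<Sum>a\<in>A. l a *\<^sub>R a) = 0"
    using assms(5) by blast
  obtain \<mu> where mu: "\<forall>a\<in>A. \<mu> a \<in> \<rat> \<and> \<mu> a \<ge> 0" "\<exists>a\<in>A. \<mu> a > 0" "(\<Sum>a\<in>A. \<mu> a *\<^sub>R a) = 0"
    using rat_pos_relation[OF assms(3) intA l rat_approx_relation] by blast
  obtain N where N0: "N > 0" and Nprop: "\<And>(c::real) y b. (\<forall>a\<in>A. b a \<in> \<int> \<and> a \<bullet> y = b a - c) \<Longrightarrow> N * c \<in> \<int>"
    using denom_bound[OF assms(3) mu] by blast
  have M0: "(\<Sum>a\<in>A. \<mu> a) > 0" using assms(3) mu(1,2) by (metis sum_pos2)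
  define Z where "Z = insert (1 / Sup ({}::real set)) ((\<lambda>k::int. N / of_int k) ` {1..\<lceil>N / \<epsilon>\<rceil>})"
  have "{qcd P | P. P \<in> NN \<alpha> A \<and> qcd P \<ge> \<epsilon>} \<subseteq> Z"
  proof clarify
    fix P :: "(real^'n) set"
    assume PN: "P \<in> NN \<alpha> A" and qe: "\<epsilon> \<le> qcd P"
    have lp: "lattice_polytope P" and cn: "core_normals P = A" using PN unfolding NN_def by auto
    define S where "S = {c. c \<in> \<rat> \<and> c > 0 \<and> shrink P c \<noteq> {}}"
    have qi: "qcd_inv P = Sup S" unfolding qcd_inv_def S_def ..
    show "qcd P \<in> Z"
    proof (cases "S = {}")
      case True
      then show ?thesis unfolding Z_def qcd_def qi by simp
    next
      case False
      have AF: "A \<subseteq> facet_normals P" using cn unfolding core_normals_def by auto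
      define B where "B = (\<Sum>a\<in>A. \<mu> a * supp P a) / (\<Sum>a\<in>A. \<mu> a)"
      have "c \<le> B" if "c \<in> S" for c
      proof -
        have "shrink P c \<noteq> {}" using that by (simp add: S_def)
        then obtain y where "y \<in> shrink P c" by blast
        hence ay: "\<forall>a\<in>A. a \<bullet> y \<le> supp P a - c" using AF unfolding shrink_def by auto
        have "0 = (\<Sum>a\<in>A. \<mu> a *\<^sub>R a) \<bullet> y" using mu(3) by simp
        also have "\<dots> = (\<Sum>a\<in>A. \<mu> a * (a \<bullet> y))" by (simp add: inner_sum_left)
        also have "\<dots> \<le> (\<Sum>a\<in>A. \<mu> a * (supp P a - c))"
          by (rule sum_mono) (use mu(1) ay in \<open>auto intro: mult_left_mono\<close>)
        also have "\<dots> = (\<Sum>a\<in>A. \<mu> a * supp P a) - (\<Sum>a\<in>A. \<mu> a * c)"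
          by (simp add: right_diff_distrib sum_subtractf)
        also have "\<dots> = (\<Sum>a\<in>A. \<mu> a * supp P a) - c * (\<Sum>a\<in>A. \<mu> a)"
          by (simp add: sum_distrib_left mult.commute)
        finally have "c * (\<Sum>a\<in>A. \<mu> a) \<le> (\<Sum>a\<in>A. \<mu> a * supp P a)" by simp
        then show ?thesis unfolding B_def using M0 by (simp add: pos_le_divide_eq)
      qed
      hence bdd: "bdd_above S" by (rule bdd_aboveI)
      have "core P \<noteq> {}" using core_nonempty[OF lp] False bdd unfolding S_def by blast
      then obtain y where y: "y \<in> core P" by blast
      define c0 where "c0 = qcd_inv P"
      have "\<forall>a\<in>A. supp P a \<in> \<int> \<and> a \<bullet> y = supp P a - c0"
        using y cn lattice_polytope_supp(2)[OF lp] intA unfolding core_normals_def c0_def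
        by auto
      hence NI: "N * c0 \<in> \<int>" by (rule Nprop)
      have qc: "qcd P = 1 / c0" unfolding qcd_def c0_def ..
      have c0p: "c0 > 0"
      proof (rule ccontr)
        assume "\<not> c0 > 0"
        hence "1 / c0 \<le> 0" by (simp add: divide_nonpos_nonneg)
        then show False using qe qc assms(2) by linarith
      qed
      have c0le: "c0 \<le> 1 / \<epsilon>" using qe qc c0p assms(2) by (simp add: field_simps)
      obtain k where k: "N * c0 = of_int k" using NI by (metis Ints_cases)
      have "N * c0 > 0" using N0 c0p by simp
      hence "of_int k > (0::real)" using k by simp
      hence k1: "k \<ge> 1" by simp
      have "N * c0 \<le> N / \<epsilon>" using c0le N0 by (simp add: mult_left_mono divide_inverse)
      hence "of_int k \<le> N / \<epsilon>" using k by simp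
      hence k2: "k \<le> \<lceil>N / \<epsilon>\<rceil>" by linarith
      have "N / of_int k = N / (N * c0)" using k by simp
      also have "\<dots> = 1 / c0" using N0 by simp
      finally have "qcd P = N / of_int k" using qc by simp
      then show ?thesis unfolding Z_def using k1 k2 by auto
    qed
  qed
  moreover have "finite Z" unfolding Z_def by simp
  ultimately show ?thesis using finite_subset by blast
qed

end
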